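(* Let $\varphi\in\mathrm{THT}^{1}$ satisfy the almost-empty requirement. Then $\varphi$ has an equilibrium model if and only if the formula $\varphi\wedge\mathsf F\mathsf G\bigwedge_{p\in P}\neg p$ is LTL-satisfiable.
   Context: Fix a finite set $P$ of atomic propositions. THT formulas over $P$: $\varphi ::= p \mid \bot \mid \varphi\vee\varphi \mid \varphi\wedge\varphi \mid \varphi\rightarrow\varphi \mid \mathsf{X}\varphi \mid \varphi\,\mathsf{U}\,\varphi \mid \varphi\,\mathsf{R}\,\varphi$, with $\neg\varphi:=\varphi\rightarrow\bot$, $\top:=\neg\bot$, and $\mathsf F\varphi$, $\mathsf G\varphi$ meaning $\top\mathsf U\varphi$ and $\bot\mathsf R\varphi$. A THT interpretation is a pair $M=(H,T)$ of infinite words over $2^P$ with $H(i)\subseteq T(i)$ for all $i$; it is total if $H=T$. Satisfaction $M,i\models\varphi$ is defined by: - $M,i\not\models\bot$; - $M,i\models p$ iff $p\in H(i)$; - $\vee$ and $\wedge$ are interpreted as usual; - $M,i\models\varphi\rightarrow\psi$ iff for both $H'\in\{H,T\}$, either $(H',T),i\not\models\varphi$ or $(H',T),i\models\psi$; - temporal modalities have their usual LTL clauses evaluated in $M$. $M\models\varphi$ means $M,0\models\varphi$. An equilibrium model of $\varphi$ is a total $(T,T)\models\varphi$ with $(H,T)\not\models\varphi$ whenever $H(i)\subseteq T(i)$ for all $i$ and $H\ne T$. LTL-satisfiability refers to standard LTL semantics over infinite words over $2^P$ (classical implication). $\mathrm{THT}^1$ is the set of THT formulas (all temporal modalities allowed)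 with implication height at most $1$, i.e. no nesting of $\rightarrow$, where negation counts as an implication. A position $i$ is empty in $(H,T)$ if $H(i)=\emptyset$. A total interpretation is almost-empty if it has only finitely many non-empty positions. $\varphi$ satisfies the almost-empty requirement if every equilibrium model of $\varphi$ is almost-empty. *)

theory Defs
  imports Main
begin

datatype 'a fml =
    Atom 'a
  | Bot
  | Or "'a fml" "'a fml"
  | And "'a fml" "'a fml"
  | Imp "'a fml" "'a fml"
  | Next "'a fml"
  | Until "'a fml" "'a fml"
  | Release "'a fml" "'a fml"

definition Neg :: "'a fml \<Rightarrow> 'a fml" where "Neg \<phi> = Imp \<phi> Bot"
definition Top :: "'a fml" where "Top = Neg Bot"
definition Fin :: "'a fml \<Rightarrow> 'a fml" where "Fin \<phi> = Until Top \<phi>"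
definition Glob :: "'a fml \<Rightarrow> 'a fml" where "Glob \<phi> = Release Bot \<phi>"

type_synonym 'a word = "nat \<Rightarrow> 'a set"

text \<open>THT satisfaction (H,T),i |= phi (H(i) subset T(i) is required separately).\<close>
fun tht :: "'a word \<Rightarrow> 'a word \<Rightarrow> nat \<Rightarrow> 'a fml \<Rightarrow> bool" where
  "tht H T i (Atom p) = (p \<in> H i)"
| "tht H T i Bot = False"
| "tht H T i (Or a b) = (tht H T i a \<or> tht H T i b)"
| "tht H T i (And a b) = (tht H T i a \<and> tht H T i b)"
| "tht H T i (Imp a b) = ((\<not> tht H T i a \<or> tht H T i b) \<and> (\<not> tht T T i a \<or> tht T T i b))"
| "tht H T i (Next a) = tht H T (Suc i) a"
| "tht H T i (Until a b) = (\<exists>k\<ge>i. tht H T k b \<and> (\<forall>j. i \<le> j \<and> j < k \<longrightarrow> tht H T j a))"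
| "tht H T i (Release a b) = (\<forall>k\<ge>i. tht H T k b \<or> (\<exists>j. i \<le> j \<and> j < k \<and> tht H T j a))"

fun ltl :: "'a word \<Rightarrow> nat \<Rightarrow> 'a fml \<Rightarrow> bool" where
  "ltl w i (Atom p) = (p \<in> w i)"
| "ltl w i Bot = False"
| "ltl w i (Or a b) = (ltl w i a \<or> ltl w i b)"
| "ltl w i (And a b) = (ltl w i a \<and> ltl w i b)"
| "ltl w i (Imp a b) = (ltl w i a \<longrightarrow> ltl w i b)"
| "ltl w i (Next a) = ltl w (Suc i) a"
| "ltl w i (Until a b) = (\<exists>k\<ge>i. ltl w k b \<and> (\<forall>j. i \<le> j \<and> j < k \<longrightarrow> ltl w j a))"
| "ltl w i (Release a b) = (\<forall>k\<ge>i. ltl w k b \<or> (\<exists>j. i \<le> j \<and> j < k \<and> ltl w j a))"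

definition ltl_satisfiable :: "'a fml \<Rightarrow> bool" where
  "ltl_satisfiable \<phi> = (\<exists>w. ltl w 0 \<phi>)"

text \<open>Implication height (negation counts since it abbreviates an implication).\<close>
fun imp_height :: "'a fml \<Rightarrow> nat" where
  "imp_height (Atom p) = 0"
| "imp_height Bot = 0"
| "imp_height (Or a b) = max (imp_height a) (imp_height b)"
| "imp_height (And a b) = max (imp_height a) (imp_height b)"
| "imp_height (Imp a b) = Suc (max (imp_height a) (imp_height b))"
| "imp_height (Next a) = imp_height a"
| "imp_height (Until a b) = max (imp_height a) (imp_height b)"
| "imp_height (Release a b) = max (imp_height a) (imp_height b)"

definition THT1 :: "'a fml set" where
  "THT1 = {\<phi>. imp_height \<phi> \<le> 1}"

definition equilibrium_model :: "'a fml \<Rightarrow> 'a word \<Rightarrow> bool" where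
  "equilibrium_model \<phi> T \<longleftrightarrow>
     tht T T 0 \<phi> \<and> (\<forall>H. (\<forall>i. H i \<subseteq> T i) \<and> H \<noteq> T \<longrightarrow> \<not> tht H T 0 \<phi>)"

definition almost_empty :: "'a word \<Rightarrow> bool" where
  "almost_empty T \<longleftrightarrow> finite {i. T i \<noteq> {}}"

definition almost_empty_requirement :: "'a fml \<Rightarrow> bool" where
  "almost_empty_requirement \<phi> \<longleftrightarrow> (\<forall>T. equilibrium_model \<phi> T \<longrightarrow> almost_empty T)"

definition BigAnd :: "'a fml list \<Rightarrow> 'a fml" where
  "BigAnd xs = foldr And xs Top"

text \<open>The conjunction of all negated atoms of P (P = UNIV of a finite, ordered atom type).\<close>
definition all_neg :: "('a::{finite,linorder}) fml" where
  "all_neg = BigAnd (map (\<lambda>p. Neg (Atom p)) (sorted_list_of_set (UNIV :: 'a set)))"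

end

theory Submission
  imports Defs
begin

lemma tht_total: "tht T T i \<psi> = ltl T i \<psi>"
  by (induction \<psi> arbitrary: i) auto

lemma h0: "imp_height \<psi> = 0 \<Longrightarrow> tht H T i \<psi> = tht H T' i \<psi>"
  by (induction \<psi> arbitrary: i) auto

lemma h1: "imp_height \<psi> \<le> 1 \<Longrightarrow> tht H T i \<psi> \<Longrightarrow> tht H H i \<psi>"
proof (induction \<psi> arbitrary: i)
  case (Imp a b)
  then have "imp_height a = 0" "imp_height b = 0" by auto
  then show ?case using Imp.prems h0[of a H T i H] h0[of b H T i H] by auto
next
  case (Until a b) then show ?case by simp (metis)
next
  case (Release a b) then show ?case by simp (metis)
qed auto

lemma ltl_bigand: "ltl w m (foldr And xs Top) \<longleftrightarrow> (\<forall>x\<in>set xs. ltl w m x)"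
  by (induction xs) (auto simp: Top_def Neg_def)

lemma ltl_all_neg: "ltl w m (all_neg :: ('a::{finite,linorder}) fml) \<longleftrightarrow> w m = {}"
  by (auto simp: all_neg_def BigAnd_def ltl_bigand Neg_def)

lemma fin_funs:
  assumes "\<forall>i\<ge>N. w i = {}"
  shows "finite {H :: 'a::finite word. H \<le> w}"
proof -
  let ?S = "{H :: 'a word. H \<le> w}"
  have "inj_on (\<lambda>H. map H [0..<N]) ?S"
  proof (rule inj_onI)
    fix x y assume x: "x \<in> ?S" and y: "y \<in> ?S" and e: "map x [0..<N] = map y [0..<N]"
    show "x = y"
    proof
      fix i show "x i = y i"
      proof (cases "i < N")
        case True then show ?thesis using e by (simp add: map_eq_conv)
      next
        case False then have "x i \<subseteq> {}" "y i \<subseteq> {}" using x y assms by (auto simp: le_fun_def not_less) blast+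
        then show ?thesis by auto
      qed
    qed
  qed
  moreover have "(\<lambda>H. map H [0..<N]) ` ?S \<subseteq> {xs. set xs \<subseteq> UNIV \<and> length xs = N}" by auto
  moreover have "finite {xs. set xs \<subseteq> (UNIV :: 'a set set) \<and> length xs = N}" by (rule finite_lists_length_eq) auto
  ultimately show ?thesis by (meson finite_imageD finite_subset)
qed

theorem mainTheorem12:
  fixes \<phi> :: "('a::{finite,linorder}) fml"
  assumes "\<phi> \<in> THT1"
    and "almost_empty_requirement \<phi>"
  shows "(\<exists>T. equilibrium_model \<phi> T) \<longleftrightarrow> ltl_satisfiable (And \<phi> (Fin (Glob all_neg)))"
proof
  assume "\<exists>T. equilibrium_model \<phi> T"
  then obtain T where T: "equilibrium_model \<phi> T" by blast
  then have "finite {i. T i \<noteq> {}}" using assms(2) by (auto simp: almost_empty_requirement_def almost_empty_def)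
  then obtain N where N: "\<forall>i\<ge>N. T i = {}"
    by (metis (mono_tags, lifting) finite_nat_set_iff_bounded_le mem_Collect_eq not_less_eq_eq)
  have "ltl T 0 \<phi>" using T tht_total by (auto simp: equilibrium_model_def)
  moreover have "ltl T 0 (Fin (Glob all_neg))"
    using N by (auto simp: Fin_def Glob_def Top_def Neg_def ltl_all_neg)
  ultimately show "ltl_satisfiable (And \<phi> (Fin (Glob all_neg)))" by (auto simp: ltl_satisfiable_def)
next
  assume "ltl_satisfiable (And \<phi> (Fin (Glob all_neg)))"
  then obtain w where w: "ltl w 0 \<phi>" "ltl w 0 (Fin (Glob all_neg))" by (auto simp: ltl_satisfiable_def)
  then obtain N where N: "\<forall>i\<ge>N. w i = {}"
    by (auto simp: Fin_def Glob_def ltl_all_neg)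
  let ?S = "{H. H \<le> w \<and> tht H H 0 \<phi>}"
  have fS: "finite ?S" using fin_funs[OF N] by (rule finite_subset[rotated]) auto
  have wS: "w \<in> ?S" using w tht_total by auto
  obtain H where H: "H \<in> ?S" "\<forall>x\<in>?S. x \<le> H \<longrightarrow> x = H"
    using finite_has_minimal[OF fS] wS by blast
  have "equilibrium_model \<phi> H"
    unfolding equilibrium_model_def
  proof (intro conjI allI impI)
    show "tht H H 0 \<phi>" using H by auto
    fix H' assume a: "(\<forall>i. H' i \<subseteq> H i) \<and> H' \<noteq> H"
    show "\<not> tht H' H 0 \<phi>"
    proof
      assume "tht H' H 0 \<phi>"
      then have "tht H' H' 0 \<phi>" using h1 assms(1) by (auto simp: THT1_def)
      moreover have "H' \<le> H" using a by (auto simp: le_fun_def)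
      moreover have "H' \<le> w" using H(1) \<open>H' \<le> H\<close> by auto
      ultimately show False using H(2) a by auto
    qed
  qed
  then show "\<exists>T. equilibrium_model \<phi> T" by blast
qed

end
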